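(* Let $A$ be a real $n\times n$ nonsingular skew-symmetric matrix ($A^t=-A$) and $b\in\mathbb{R}^n$. For each integer $q\ge 0$: (i) The CGNE iterate $x^E_q$, i.e. the unique vector $x^E_q\in\mathcal{K}_q(A^2,Ab)$ satisfying $p^t(b-Ax^E_q)=0$ for all $p\in\mathcal{K}_q(A^2,b)$, lies in $\mathcal{K}_{2q}(A,b)$ and satisfies the Galerkin condition $p^t(b-Ax^E_q)=0$ for all $p\in\mathcal{K}_{2q}(A,b)$. Consequently the Galerkin iterate $x^G_{2q}$ (the unique vector in $\mathcal{K}_{2q}(A,b)$ satisfying this Galerkin condition) equals $x^E_q$. (ii) The CGNR iterate $x^R_q=\operatorname{argmin}_{z\in\mathcal{K}_q(A^2,Ab)}\|b-Az\|$ satisfies $x^R_q=\operatorname{argmin}_{z\in\mathcal{K}_{2q}(A,b)}\|b-Az\|=\operatorname{argmin}_{z\in\mathcal{K}_{2q+1}(A,b)}\|b-Az\|$; that is, with $x^M_m=\operatorname{argmin}_{z\in\mathcal{K}_m(A,b)}\|b-Az\|$ the minimum residual iterates, $x^M_{2q+1}=x^M_{2q}=x^R_q$.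
   Context: For a matrix $B$, a vector $c$ and an integer $m\ge 0$, the Krylov subspace is $\mathcal{K}_m(B,c)=\operatorname{span}\{c,Bc,\ldots,B^{m-1}c\}$ (with $\mathcal{K}_0(B,c)=\{0\}$). $\|\cdot\|$ denotes the Euclidean norm. The minimum residual iterate over a subspace is unique since $A$ is nonsingular. *)

theory Defs
  imports "HOL-Analysis.Analysis"
begin

text \<open>Krylov subspace K_m(B,c) = span{c, Bc, ..., B^(m-1) c}; K_0 = span {} = {0}.\<close>
definition krylov :: "real^'n^'n \<Rightarrow> real^'n \<Rightarrow> nat \<Rightarrow> (real^'n) set" where
  "krylov B c m = span {(((*v) B) ^^ k) c | k. k < m}"

text \<open>x lies in the search space V and the residual b - A x is orthogonal to the test space W.\<close>
definition petrov_galerkin ::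
  "(real^'n) set \<Rightarrow> (real^'n) set \<Rightarrow> real^'n^'n \<Rightarrow> real^'n \<Rightarrow> real^'n \<Rightarrow> bool" where
  "petrov_galerkin V W A b x \<longleftrightarrow> x \<in> V \<and> (\<forall>p\<in>W. p \<bullet> (b - A *v x) = 0)"

text \<open>x minimizes the residual norm over V.\<close>
definition min_residual ::
  "(real^'n) set \<Rightarrow> real^'n^'n \<Rightarrow> real^'n \<Rightarrow> real^'n \<Rightarrow> bool" where
  "min_residual V A b x \<longleftrightarrow> x \<in> V \<and> (\<forall>z\<in>V. norm (b - A *v x) \<le> norm (b - A *v z))"

end

theory Submission imports Defs begin


lemma skew_dot:
  fixes A :: "real^'n^'n"
  assumes "transpose A = - A"
  shows "x \<bullet> (A *v y) = - ((A *v x) \<bullet> y)"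
proof -
  have "x \<bullet> (A *v y) = (x v* A) \<bullet> y" by (simp add: dot_lmul_matrix)
  also have "x v* A = transpose A *v x" by simp
  also have "\<dots> = - (A *v x)" using assms
    by (simp add: matrix_vector_mult_def vec_eq_iff sum_negf)
  finally show ?thesis by simp
qed

lemma skew_self:
  fixes A :: "real^'n^'n"
  assumes "transpose A = - A"
  shows "x \<bullet> (A *v x) = 0"
  using skew_dot[OF assms, of x x] by (simp add: inner_commute)

lemma pow_even: "(((*v) (A**A)) ^^ i) c = (((*v) A) ^^ (2*i)) c"
  by (induction i) (auto simp: matrix_vector_mul_assoc)

lemma pow_comm: "(((*v) (A**A)) ^^ i) (A *v c) = A *v ((((*v) (A**A)) ^^ i) c)"
  by (induction i) (auto simp: matrix_vector_mul_assoc matrix_mul_assoc)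

lemma pow_skew:
  fixes A :: "real^'n^'n"
  assumes "transpose A = - A"
  shows "((((*v) A) ^^ n) x) \<bullet> y = (-1)^n * (x \<bullet> ((((*v) A) ^^ n) y))"
proof (induction n arbitrary: y)
  case 0 then show ?case by simp
next
  case (Suc n)
  have "((((*v) A) ^^ Suc n) x) \<bullet> y = (A *v ((((*v) A) ^^ n) x)) \<bullet> y" by simp
  also have "\<dots> = - (((((*v) A) ^^ n) x) \<bullet> (A *v y))"
    using skew_dot[OF assms, of "((((*v) A) ^^ n) x)" y] by simp
  also have "\<dots> = - ((-1)^n * (x \<bullet> ((((*v) A) ^^ n) (A *v y))))" using Suc by simp
  also have "((((*v) A) ^^ n) (A *v y)) = (((*v) A) ^^ Suc n) y"
    by (simp add: funpow_swap1)
  finally show ?case by simp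
qed

lemma odd_zero:
  fixes A :: "real^'n^'n"
  assumes "transpose A = - A"
  shows "b \<bullet> ((((*v) A) ^^ (2*m+1)) b) = 0"
proof -
  have "(((*v) A) ^^ (2*m+1)) b = (((*v) A) ^^ m) ((((*v) A) ^^ (Suc m)) b)"
  proof -
    have e: "2*m+1 = m + Suc m" by simp
    show ?thesis by (subst e, subst funpow_add, simp)
  qed
  hence "b \<bullet> ((((*v) A) ^^ (2*m+1)) b) = (-1)^m * (((((*v) A) ^^ m) b) \<bullet> ((((*v) A) ^^ (Suc m)) b))"
    using pow_skew[OF assms, of m b "(((*v) A) ^^ (Suc m)) b"] by simp
  also have "(((*v) A) ^^ (Suc m)) b = A *v ((((*v) A) ^^ m) b)" by simp
  finally show ?thesis using skew_self[OF assms] by simp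
qed


definition Eall :: "real^'n^'n \<Rightarrow> real^'n \<Rightarrow> (real^'n) set" where
  "Eall A b = span {(((*v) A) ^^ (2*i)) b | i. True}"

lemma Eall_orth:
  fixes A :: "real^'n^'n"
  assumes sk: "transpose A = - A" and u: "u \<in> Eall A b" and w: "w \<in> Eall A b"
  shows "u \<bullet> (A *v w) = 0"
proof -
  have lin: "linear ((*v) A)" by (simp add: matrix_vector_mul_linear)
  have "A *v w \<in> (*v) A ` Eall A b" using w by blast
  also have "\<dots> = span ((*v) A ` {(((*v) A) ^^ (2*i)) b | i. True})"
    unfolding Eall_def using span_linear_image[OF lin] by simp
  finally have Aw: "A *v w \<in> span ((*v) A ` {(((*v) A) ^^ (2*i)) b | i. True})" .
  have gen: "(((*v) A) ^^ (2*i)) b \<bullet> (A *v (((*v) A) ^^ (2*j)) b) = 0" for i j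
  proof -
    have "(((*v) A) ^^ (2*i)) b \<bullet> (A *v (((*v) A) ^^ (2*j)) b)
        = (-1)^(2*i) * (b \<bullet> (((*v) A) ^^ (2*i)) (A *v (((*v) A) ^^ (2*j)) b))"
      by (rule pow_skew[OF sk])
    also have "(((*v) A) ^^ (2*i)) (A *v (((*v) A) ^^ (2*j)) b) = (((*v) A) ^^ (2*(i+j)+1)) b"
      by (simp add: funpow_add funpow_swap1 algebra_simps)
    finally show ?thesis using odd_zero[OF sk, of b "i+j"] by (simp add: distrib_left)
  qed
  have "orthogonal (A *v w) u"
  proof (rule orthogonal_to_span[OF u[unfolded Eall_def]])
    fix y assume "y \<in> {(((*v) A) ^^ (2*i)) b | i. True}"
    then obtain i where y: "y = (((*v) A) ^^ (2*i)) b" by blast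
    have "orthogonal y (A *v w)"
      by (rule orthogonal_to_span[OF Aw]) (use gen y in \<open>auto simp: orthogonal_def inner_commute\<close>)
    then show "orthogonal (A *v w) y" by (simp add: orthogonal_commute)
  qed
  then show ?thesis by (simp add: orthogonal_def inner_commute)
qed

lemma Eall_orth2:
  fixes A :: "real^'n^'n"
  assumes sk: "transpose A = - A" and u: "u \<in> Eall A b" and w: "w \<in> Eall A b"
  shows "(A *v u) \<bullet> w = 0"
  using Eall_orth[OF sk w u] skew_dot[OF sk, of w u] by (simp add: inner_commute)

lemma b_Eall: "b \<in> Eall A b"
  unfolding Eall_def by (rule span_base) (metis (mono_tags, lifting) funpow_0 mem_Collect_eq mult_0_right)

lemma E_Eall: "krylov (A**A) b n \<subseteq> Eall A b"
  unfolding krylov_def Eall_def by (rule span_mono) (auto simp: pow_even)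

lemma Eall_S:
  fixes A :: "real^'n^'n"
  assumes w: "w \<in> Eall A b"
  shows "A *v (A *v w) \<in> Eall A b"
proof -
  have lin: "linear ((*v) (A**A))" by (simp add: matrix_vector_mul_linear)
  have "A *v (A *v w) = (A**A) *v w" by (simp add: matrix_vector_mul_assoc)
  also have "\<dots> \<in> (*v) (A**A) ` Eall A b" using w by blast
  also have "\<dots> = span ((*v) (A**A) ` {(((*v) A) ^^ (2*i)) b | i. True})"
    unfolding Eall_def using span_linear_image[OF lin] by simp
  also have "\<dots> \<subseteq> Eall A b" unfolding Eall_def
  proof (rule span_mono, rule subsetI)
    fix x assume "x \<in> (*v) (A**A) ` {(((*v) A) ^^ (2*i)) b | i. True}"
    then obtain i where "x = (A**A) *v (((*v) A) ^^ (2*i)) b" by blast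
    then have "x = (((*v) A) ^^ (2*Suc i)) b"
      by (simp add: matrix_vector_mul_assoc)
    then show "x \<in> {(((*v) A) ^^ (2*i)) b | i. True}" by blast
  qed
  finally show ?thesis .
qed

lemma krylov_decomp:
  fixes A :: "real^'n^'n"
  shows "krylov A b m = {u + A *v w | u w. u \<in> krylov (A**A) b ((m+1) div 2) \<and> w \<in> krylov (A**A) b (m div 2)}"
proof -
  let ?G1 = "{(((*v) (A**A)) ^^ i) b | i. i < (m+1) div 2}"
  let ?G2 = "{(((*v) (A**A)) ^^ i) b | i. i < m div 2}"
  have lin: "linear ((*v) A)" by (simp add: matrix_vector_mul_linear)
  have G: "{(((*v) A) ^^ k) b | k. k < m} = ?G1 \<union> (*v) A ` ?G2"
  proof (rule set_eqI, rule iffI)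
    fix x assume "x \<in> {(((*v) A) ^^ k) b | k. k < m}"
    then obtain k where k: "k < m" "x = (((*v) A) ^^ k) b" by blast
    show "x \<in> ?G1 \<union> (*v) A ` ?G2"
    proof (cases "even k")
      case True
      then obtain i where "k = 2*i" by blast
      then have "x = (((*v) (A**A)) ^^ i) b" "i < (m+1) div 2" using k by (auto simp: pow_even)
      then show ?thesis by blast
    next
      case False
      then obtain i where i: "k = 2*i+1" using oddE by blast
      then have "x = A *v (((*v) (A**A)) ^^ i) b" "i < m div 2" using k
        by (auto simp: pow_even funpow_swap1)
      then show ?thesis by blast
    qed
  next
    fix x assume "x \<in> ?G1 \<union> (*v) A ` ?G2"
    then show "x \<in> {(((*v) A) ^^ k) b | k. k < m}"
    proof
      assume "x \<in> ?G1"
      then obtain i where "i < (m+1) div 2" "x = (((*v) A) ^^ (2*i)) b" by (auto simp: pow_even)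
      moreover have "2*i < m" using \<open>i < (m+1) div 2\<close> by linarith
      ultimately show ?thesis by blast
    next
      assume "x \<in> (*v) A ` ?G2"
      then obtain i where "i < m div 2" "x = (((*v) A) ^^ (2*i+1)) b"
        by (auto simp: pow_even funpow_swap1)
      moreover have "2*i+1 < m" using \<open>i < m div 2\<close> by linarith
      ultimately show ?thesis by blast
    qed
  qed
  show ?thesis unfolding krylov_def G span_Un span_linear_image[OF lin] by blast
qed

lemma krylov_Ab:
  fixes A :: "real^'n^'n"
  shows "krylov (A**A) (A *v b) q = (*v) A ` krylov (A**A) b q"
proof -
  have lin: "linear ((*v) A)" by (simp add: matrix_vector_mul_linear)
  have "{(((*v) (A**A)) ^^ k) (A *v b) | k. k < q} = (*v) A ` {(((*v) (A**A)) ^^ k) b | k. k < q}"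
    by (auto simp: pow_comm)
  then show ?thesis unfolding krylov_def by (simp add: span_linear_image[OF lin])
qed

lemma proj_unique:
  fixes W :: "(real^'n) set"
  assumes "subspace W"
  shows "\<exists>!x. x \<in> W \<and> (\<forall>v\<in>W. v \<bullet> (y - x) = 0)"
proof -
  obtain p z where p: "p \<in> span W" and z: "\<And>w. w \<in> span W \<Longrightarrow> orthogonal z w" and yz: "y = p + z"
    using orthogonal_subspace_decomp_exists by blast
  have pW: "p \<in> W" using p assms span_eq_iff by blast
  show ?thesis
  proof (rule ex1I[of _ p])
    show "p \<in> W \<and> (\<forall>v\<in>W. v \<bullet> (y - p) = 0)"
      using pW z yz by (auto simp: orthogonal_def inner_commute span_base)
  next
    fix x assume x: "x \<in> W \<and> (\<forall>v\<in>W. v \<bullet> (y - x) = 0)"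
    have d: "x - p \<in> W" using x pW assms by (simp add: subspace_diff)
    have "(x - p) \<bullet> z = 0" using z[OF span_base[OF d]] by (simp add: orthogonal_def inner_commute)
    then have "(x - p) \<bullet> (y - p) = 0" using yz by simp
    moreover have "(x - p) \<bullet> (y - x) = 0" using x d by blast
    ultimately have "(x - p) \<bullet> (y - p) = 0" "(x - p) \<bullet> (y - x) = 0" by auto
    then have "(x - p) \<bullet> (x - p) = 0"
      by (metis (no_types, lifting) diff_diff_eq2 diff_self inner_diff_right eq_iff_diff_eq_0 diff_diff_cancel)
    then show "x = p" by simp
  qed
qed


lemma inv_inj:
  fixes A :: "real^'n^'n"
  assumes "invertible A" "A *v x = 0"
  shows "x = 0"
proof -
  obtain B where "B ** A = mat 1" using assms(1) unfolding invertible_def by blast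
  then have "x = B *v (A *v x)" by (simp add: matrix_vector_mul_assoc)
  also have "\<dots> = 0" using assms(2) by simp
  finally show ?thesis .
qed

lemma mr_suff:
  fixes A :: "real^'n^'n"
  assumes V: "subspace V" and x: "x \<in> V" and o: "\<forall>v\<in>V. (A *v v) \<bullet> (b - A *v x) = 0"
  shows "min_residual V A b x"
  unfolding min_residual_def
proof (intro conjI x ballI)
  fix z assume z: "z \<in> V"
  have d: "x - z \<in> V" using V x z by (simp add: subspace_diff)
  have eq: "b - A *v z = (b - A *v x) + A *v (x - z)"
    by (simp add: matrix_vector_mult_diff_distrib)
  have h: "(A *v (x - z)) \<bullet> (b - A *v x) = 0" using o d by blast
  have "orthogonal (b - A *v x) (A *v (x - z))"
    unfolding orthogonal_def by (subst inner_commute) (rule h)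
  then have "(norm (b - A *v z))\<^sup>2 = (norm (b - A *v x))\<^sup>2 + (norm (A *v (x - z)))\<^sup>2"
    unfolding eq by (rule norm_add_Pythagorean)
  then have "(norm (b - A *v x))\<^sup>2 \<le> (norm (b - A *v z))\<^sup>2" by simp
  then show "norm (b - A *v x) \<le> norm (b - A *v z)"
    by (rule power2_le_imp_le) simp
qed

lemma mr_exists:
  fixes A :: "real^'n^'n"
  assumes V: "subspace V"
  shows "\<exists>x. x \<in> V \<and> (\<forall>v\<in>V. (A *v v) \<bullet> (b - A *v x) = 0)"
proof -
  have lin: "linear ((*v) A)" by (simp add: matrix_vector_mul_linear)
  have Y: "subspace ((*v) A ` V)" using linear_subspace_image[OF lin V] .
  obtain y z where y: "y \<in> span ((*v) A ` V)" and z: "\<And>w. w \<in> span ((*v) A ` V) \<Longrightarrow> orthogonal z w"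
    and bz: "b = y + z"
    using orthogonal_subspace_decomp_exists by blast
  have "y \<in> (*v) A ` V" using y Y span_eq_iff by blast
  then obtain x0 where x0: "x0 \<in> V" "y = A *v x0" by blast
  have "\<forall>v\<in>V. (A *v v) \<bullet> (b - A *v x0) = 0"
  proof
    fix v assume "v \<in> V"
    then have "orthogonal z (A *v v)" using z span_base by blast
    then show "(A *v v) \<bullet> (b - A *v x0) = 0" using bz x0 by (simp add: orthogonal_def inner_commute)
  qed
  then show ?thesis using x0 by blast
qed

lemma mr_unique:
  fixes A :: "real^'n^'n"
  assumes V: "subspace V" and inv: "invertible A"
  shows "\<exists>!x. min_residual V A b x"
proof -
  obtain x0 where x0: "x0 \<in> V" and o: "\<forall>v\<in>V. (A *v v) \<bullet> (b - A *v x0) = 0"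
    using mr_exists[OF V] by blast
  show ?thesis
  proof (rule ex1I[of _ x0])
    show "min_residual V A b x0" by (rule mr_suff[OF V x0 o])
  next
    fix x assume m: "min_residual V A b x"
    then have x: "x \<in> V" and le: "norm (b - A *v x) \<le> norm (b - A *v x0)"
      using x0 unfolding min_residual_def by auto
    have d: "x0 - x \<in> V" using V x x0 by (simp add: subspace_diff)
    have eq: "b - A *v x = (b - A *v x0) + A *v (x0 - x)"
      by (simp add: matrix_vector_mult_diff_distrib)
    have h: "(A *v (x0 - x)) \<bullet> (b - A *v x0) = 0" using o d by blast
    have "orthogonal (b - A *v x0) (A *v (x0 - x))"
      unfolding orthogonal_def by (subst inner_commute) (rule h)
    then have "(norm (b - A *v x))\<^sup>2 = (norm (b - A *v x0))\<^sup>2 + (norm (A *v (x0 - x)))\<^sup>2"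
      unfolding eq by (rule norm_add_Pythagorean)
    moreover have "(norm (b - A *v x))\<^sup>2 \<le> (norm (b - A *v x0))\<^sup>2"
      using le by (simp add: power_mono)
    ultimately have "norm (A *v (x0 - x)) = 0" by simp
    then have "x0 - x = 0" using inv_inj[OF inv] by (simp del: right_minus_eq)
    then show "x = x0" by simp
  qed
qed


theorem theorem1:
  fixes A :: "real^'n^'n" and b :: "real^'n" and q :: nat
  assumes skew: "transpose A = - A"
    and nonsing: "invertible A"
  shows
    "(\<exists>!x. petrov_galerkin (krylov (A ** A) (A *v b) q) (krylov (A ** A) b q) A b x)
     \<and> (\<forall>x. petrov_galerkin (krylov (A ** A) (A *v b) q) (krylov (A ** A) b q) A b x \<longrightarrow>
            x \<in> krylov A b (2*q) \<and> (\<forall>p\<in>krylov A b (2*q). p \<bullet> (b - A *v x) = 0))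
     \<and> (\<exists>!x. petrov_galerkin (krylov A b (2*q)) (krylov A b (2*q)) A b x)
     \<and> (THE x. petrov_galerkin (krylov A b (2*q)) (krylov A b (2*q)) A b x)
         = (THE x. petrov_galerkin (krylov (A ** A) (A *v b) q) (krylov (A ** A) b q) A b x)
     \<and> (\<exists>!x. min_residual (krylov (A ** A) (A *v b) q) A b x)
     \<and> (\<exists>!x. min_residual (krylov A b (2*q)) A b x)
     \<and> (\<exists>!x. min_residual (krylov A b (2*q+1)) A b x)
     \<and> (THE x. min_residual (krylov (A ** A) (A *v b) q) A b x)
         = (THE x. min_residual (krylov A b (2*q)) A b x)
     \<and> (THE x. min_residual (krylov A b (2*q+1)) A b x)
         = (THE x. min_residual (krylov A b (2*q)) A b x)"
proof -
  define E where "E = krylov (A**A) b q"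
  define W where "W = krylov (A ** A) (A *v b) q"
  define V2 where "V2 = krylov A b (2*q)"
  define V3 where "V3 = krylov A b (2*q+1)"
  have subK: "subspace (krylov B c m)" for B c m unfolding krylov_def by (rule subspace_span)
  have sE: "subspace E" and sW: "subspace W" and sV2: "subspace V2" and sV3: "subspace V3"
    unfolding E_def W_def V2_def V3_def by (rule subK)+
  have WE: "W = (*v) A ` E" unfolding W_def E_def by (rule krylov_Ab)
  have V2d: "V2 = {u + A *v w | u w. u \<in> E \<and> w \<in> E}"
    using krylov_decomp[of A b "2*q"] unfolding V2_def E_def by simp
  have V3d: "V3 = {u + A *v w | u w. u \<in> krylov (A**A) b (q+1) \<and> w \<in> E}"
    using krylov_decomp[of A b "2*q+1"] unfolding V3_def E_def by simp
  have EA: "E \<subseteq> Eall A b" unfolding E_def by (rule E_Eall)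
  have E1A: "krylov (A**A) b (Suc q) \<subseteq> Eall A b" by (rule E_Eall)
  have E0: "0 \<in> E" using sE subspace_0 by blast
  have bA: "b \<in> Eall A b" by (rule b_Eall)
  obtain B where AB: "A ** B = mat 1" using nonsing unfolding invertible_def by blast
  define xs where "xs = B *v b"
  have Axs: "A *v xs = b" unfolding xs_def by (simp add: matrix_vector_mul_assoc AB)
  \<comment> \<open>CGNE\<close>
  have cgne_iff: "petrov_galerkin W E A b x \<longleftrightarrow> x \<in> W \<and> (\<forall>v\<in>W. v \<bullet> (xs - x) = 0)" for x
  proof -
    have bx: "b - A *v x = A *v (xs - x)"
      using Axs by (simp add: matrix_vector_mult_diff_distrib)
    have pe: "p \<bullet> (b - A *v x) = - ((A *v p) \<bullet> (xs - x))" for p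
      unfolding bx by (rule skew_dot[OF skew])
    have "(\<forall>p\<in>E. p \<bullet> (b - A *v x) = 0) \<longleftrightarrow> (\<forall>v\<in>W. v \<bullet> (xs - x) = 0)"
    proof
      assume L: "\<forall>p\<in>E. p \<bullet> (b - A *v x) = 0"
      show "\<forall>v\<in>W. v \<bullet> (xs - x) = 0"
      proof
        fix v assume "v \<in> W"
        then obtain p where p: "p \<in> E" "v = A *v p" unfolding WE by blast
        show "v \<bullet> (xs - x) = 0" using L p pe[of p] by simp
      qed
    next
      assume R: "\<forall>v\<in>W. v \<bullet> (xs - x) = 0"
      show "\<forall>p\<in>E. p \<bullet> (b - A *v x) = 0"
      proof
        fix p assume p: "p \<in> E"
        then have "A *v p \<in> W" unfolding WE by blast
        then show "p \<bullet> (b - A *v x) = 0" using R pe[of p] by simp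
      qed
    qed
    then show ?thesis unfolding petrov_galerkin_def by blast
  qed
  have cgne_ex1: "\<exists>!x. petrov_galerkin W E A b x"
    unfolding cgne_iff by (rule proj_unique[OF sW])
  have cgne_gal: "x \<in> V2 \<and> (\<forall>p\<in>V2. p \<bullet> (b - A *v x) = 0)" if c: "petrov_galerkin W E A b x" for x
  proof -
    have xW: "x \<in> W" and o: "\<forall>p\<in>E. p \<bullet> (b - A *v x) = 0"
      using c unfolding petrov_galerkin_def by auto
    obtain w0 where w0: "w0 \<in> E" "x = A *v w0" using xW WE by blast
    have "x = 0 + A *v w0" using w0 by simp
    then have "x \<in> V2" unfolding V2d using E0 w0 by blast
    moreover have "\<forall>p\<in>V2. p \<bullet> (b - A *v x) = 0"
    proof
      fix p assume "p \<in> V2"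
      then obtain u w where uw: "u \<in> E" "w \<in> E" "p = u + A *v w" unfolding V2d by blast
      have "(A *v w) \<bullet> b = 0" using Eall_orth2[OF skew _ bA] uw EA by blast
      moreover have "(A *v w) \<bullet> (A *v (A *v w0)) = 0"
        using Eall_orth2[OF skew _ Eall_S] uw w0 EA by blast
      moreover have "u \<bullet> (b - A *v x) = 0" using o uw by blast
      ultimately show "p \<bullet> (b - A *v x) = 0" using uw w0
        by (simp add: inner_add_left inner_diff_right)
    qed
    ultimately show ?thesis by blast
  qed
  obtain x0 where x0: "petrov_galerkin W E A b x0" using cgne_ex1 by blast
  have gal_x0: "petrov_galerkin V2 V2 A b x0"
    using cgne_gal[OF x0] unfolding petrov_galerkin_def by blast
  have gal_uniq: "x = y" if gx: "petrov_galerkin V2 V2 A b x" and gy: "petrov_galerkin V2 V2 A b y" for x y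
  proof -
    have d: "x - y \<in> V2" using gx gy sV2 unfolding petrov_galerkin_def by (simp add: subspace_diff)
    have od: "p \<bullet> (A *v (x - y)) = 0" if "p \<in> V2" for p
    proof -
      have "p \<bullet> (b - A *v x) = 0" "p \<bullet> (b - A *v y) = 0"
        using gx gy that unfolding petrov_galerkin_def by auto
      then show ?thesis by (simp add: matrix_vector_mult_diff_distrib inner_diff_right)
    qed
    obtain u w where uw: "u \<in> E" "w \<in> E" "x - y = u + A *v w" using d unfolding V2d by blast
    have Ad: "A *v (x - y) = A *v u + A *v (A *v w)"
      using uw by (simp add: matrix_vector_right_distrib)
    have "w = w + A *v 0" by simp
    then have wV: "w \<in> V2" unfolding V2d using uw E0 by blast
    have "w \<bullet> (A *v u) = 0" using Eall_orth[OF skew] uw EA by blast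
    then have "w \<bullet> (A *v (A *v w)) = 0" using od[OF wV] Ad by (simp add: inner_add_right)
    then have "(A *v w) \<bullet> (A *v w) = 0" using skew_dot[OF skew, of w "A *v w"] by simp
    then have Aw: "A *v w = 0" by simp
    have "A *v u = 0 + A *v u" by simp
    then have AuV: "A *v u \<in> V2" unfolding V2d using uw E0 by blast
    have "(A *v u) \<bullet> (A *v u) = 0" using od[OF AuV] Ad Aw by simp
    then have "u = 0" using inv_inj[OF nonsing] by simp
    then have "x - y = 0" using uw Aw by simp
    then show ?thesis by simp
  qed
  have gal_ex1: "\<exists>!x. petrov_galerkin V2 V2 A b x"
    by (rule ex1I[of _ x0]) (use gal_x0 gal_uniq in auto)
  have the_gal: "(THE x. petrov_galerkin V2 V2 A b x) = x0"
    by (rule the1_equality[OF gal_ex1 gal_x0])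
  have the_cgne: "(THE x. petrov_galerkin W E A b x) = x0"
    by (rule the1_equality[OF cgne_ex1 x0])
  \<comment> \<open>min residual\<close>
  have mW: "\<exists>!x. min_residual W A b x" by (rule mr_unique[OF sW nonsing])
  have mV2: "\<exists>!x. min_residual V2 A b x" by (rule mr_unique[OF sV2 nonsing])
  have mV3: "\<exists>!x. min_residual V3 A b x" by (rule mr_unique[OF sV3 nonsing])
  obtain xr where xr: "xr \<in> W" and oW: "\<forall>v\<in>W. (A *v v) \<bullet> (b - A *v xr) = 0"
    using mr_exists[OF sW] by blast
  obtain w0 where w0: "w0 \<in> E" "xr = A *v w0" using xr WE by blast
  have key: "(A *v (u + A *v w)) \<bullet> (b - A *v xr) = 0" if u: "u \<in> Eall A b" and w: "w \<in> E" for u w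
  proof -
    have "(A *v u) \<bullet> b = 0" using Eall_orth2[OF skew u bA] .
    moreover have "(A *v u) \<bullet> (A *v (A *v w0)) = 0"
      using Eall_orth2[OF skew u Eall_S] w0 EA by blast
    moreover have "(A *v (A *v w)) \<bullet> (b - A *v xr) = 0" using oW w WE by blast
    ultimately show ?thesis using w0
      by (simp add: matrix_vector_right_distrib inner_add_left inner_diff_right)
  qed
  have xrV2: "xr \<in> V2" proof - have "xr = 0 + A *v w0" using w0 by simp
    then show ?thesis unfolding V2d using E0 w0 by blast qed
  have xrV3: "xr \<in> V3" proof - have "0 \<in> krylov (A**A) b (q+1)" using subK subspace_0 by blast
    moreover have "xr = 0 + A *v w0" using w0 by simp
    ultimately show ?thesis unfolding V3d using w0 by blast qed
  have mrW: "min_residual W A b xr" by (rule mr_suff[OF sW xr oW])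
  have mrV2: "min_residual V2 A b xr"
    by (rule mr_suff[OF sV2 xrV2]) (auto simp: V2d intro!: key dest: subsetD[OF EA])
  have mrV3: "min_residual V3 A b xr"
    by (rule mr_suff[OF sV3 xrV3]) (auto simp: V3d intro!: key dest: subsetD[OF E1A])
  have t1: "(THE x. min_residual W A b x) = xr" by (rule the1_equality[OF mW mrW])
  have t2: "(THE x. min_residual V2 A b x) = xr" by (rule the1_equality[OF mV2 mrV2])
  have t3: "(THE x. min_residual V3 A b x) = xr" by (rule the1_equality[OF mV3 mrV3])
  have gal2: "\<forall>x. petrov_galerkin W E A b x \<longrightarrow> x \<in> V2 \<and> (\<forall>p\<in>V2. p \<bullet> (b - A *v x) = 0)"
    using cgne_gal by blast
  have T1: "(THE x. petrov_galerkin V2 V2 A b x) = (THE x. petrov_galerkin W E A b x)"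
    unfolding the_gal the_cgne ..
  have T2: "(THE x. min_residual W A b x) = (THE x. min_residual V2 A b x)"
    unfolding t1 t2 ..
  have T3: "(THE x. min_residual V3 A b x) = (THE x. min_residual V2 A b x)"
    unfolding t3 t2 ..
  note all = cgne_ex1 gal2 gal_ex1 T1 mW mV2 mV3 T2 T3
  show ?thesis
    using all unfolding W_def E_def V2_def V3_def by (intro conjI)
qed

end
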